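(* For every intuitionistic formula $A$: every proof of $\ \Rightarrow w:A$ in $\mathsf{L(IL)}$ can be step-wise translated into a proof of the nested sequent $\ \Rightarrow A$ in $\mathsf{N(IL)}$. In particular, if $\Rightarrow w:A$ is provable in $\mathsf{L(IL)}$ then $\Rightarrow A$ is provable in $\mathsf{N(IL)}$.
   Context: Intuitionistic formulas: $A::=p\mid\bot\mid A\lor A\mid A\land A\mid A\supset A$. $\mathsf{L(IL)}$ works on labeled sequents $\mathcal{R},\Gamma\Rightarrow\Delta$ ($\mathcal{R}$ multiset of atoms $w\le u$; $\Gamma,\Delta$ multisets of labeled formulas $w:A$) with rules: $(id)$ $\mathcal{R},w\le u,\Gamma,w:p\Rightarrow u:p,\Delta$; $(\bot_l)$ $\mathcal{R},w\le u,\Gamma,w:\bot\Rightarrow\Delta$; $(\supset_r)$ from $\mathcal{R},w\le u,\Gamma,u:A\Rightarrow u:B,\Delta$ infer $\mathcal{R},\Gamma\Rightarrow w:A\supset B,\Delta$, $u$ fresh; $(\lor_l)$ from $\mathcal{R},\Gamma,w:A\Rightarrow\Delta$ and $\mathcal{R},\Gamma,w:B\Rightarrow\Delta$ infer $\mathcal{R},\Gamma,w:A\lor B\Rightarrow\Delta$; $(\lor_r)$ from $\mathcal{R},\Gamma\Rightarrow w:A,w:B,\Delta$ infer $\mathcal{R},\Gamma\Rightarrow w:A\lor B,\Delta$; $(\land_l)$ from $\mathcal{R},\Gamma,w:A,w:B\Rightarrow\Delta$ infer $\mathcal{R},\Gamma,w:A\land B\Rightarrow\Delta$; $(\land_r)$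 from $\mathcal{R},\Gamma\Rightarrow w:A,\Delta$ and $\mathcal{R},\Gamma\Rightarrow w:B,\Delta$ infer $\mathcal{R},\Gamma\Rightarrow w:A\land B,\Delta$; $(\supset_l)$ from $\mathcal{R},w\le u,\Gamma,w:A\supset B,u:B\Rightarrow\Delta$ and $\mathcal{R},w\le u,\Gamma,w:A\supset B\Rightarrow u:A,\Delta$ infer $\mathcal{R},w\le u,\Gamma,w:A\supset B\Rightarrow\Delta$; $(ref)$ from $\mathcal{R},w\le w,\Gamma\Rightarrow\Delta$ infer $\mathcal{R},\Gamma\Rightarrow\Delta$; $(tra)$ from $\mathcal{R},w\le u,u\le v,w\le v,\Gamma\Rightarrow\Delta$ infer $\mathcal{R},w\le u,u\le v,\Gamma\Rightarrow\Delta$. Nested sequents of $\mathsf{N(IL)}$ have the form $\Gamma\Rightarrow\Delta,[\Sigma_1]_{w_1},\dots,[\Sigma_n]_{w_n}$ with $\Gamma,\Delta$ multisets of formulas and $\Sigma_i$ nested sequents; they encode trees whose nodes are sequents $\Gamma\Rightarrow\Delta$, each node carrying a distinct name (the root named $r$). $\Sigma\{\Gamma\Rightarrow\Delta\}_w$ denotes a nested sequent with node $w$ containing $\Gamma\Rightarrow\Delta$, and $\Sigma\{\cdot\}_w\{\cdot\}_u$ displays two nodes; "$u$ is reachable from $w$" means there is a (possibly length-0) downward path from $w$ to $u$ in the tree. Rules of $\mathsf{N(IL)}$: $(id)$ $\Sigma\{\Gamma_1,p\Rightarrow\Delta_1\}_w\{\Gamma_2\Rightarrow p,\Delta_2\}_u$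 ($u$ reachable from $w$; if $u=w$ this means $p$ occurs on both sides of one node); $(\bot_l)$ $\Sigma\{\Gamma,\bot\Rightarrow\Delta\}_w$; $(\lor_l),(\lor_r),(\land_l),(\land_r)$ as the sequent rules applied inside a node $\Sigma\{\cdot\}_w$; $(\supset_l)$ from $\Sigma\{\Gamma_1,A\supset B\Rightarrow\Delta_1\}_w\{\Gamma_2,B\Rightarrow\Delta_2\}_u$ and $\Sigma\{\Gamma_1,A\supset B\Rightarrow\Delta_1\}_w\{\Gamma_2\Rightarrow A,\Delta_2\}_u$ infer $\Sigma\{\Gamma_1,A\supset B\Rightarrow\Delta_1\}_w\{\Gamma_2\Rightarrow\Delta_2\}_u$ ($u$ reachable from $w$); $(\supset_r)$ from $\Sigma\{\Gamma\Rightarrow\Delta,[A\Rightarrow B]_u\}_w$ infer $\Sigma\{\Gamma\Rightarrow\Delta,A\supset B\}_w$ ($u$ a fresh name). *)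

theory Defs
  imports Main "HOL-Library.Multiset"
begin

datatype 'a fm = At 'a | Bot | Or "'a fm" "'a fm" | And "'a fm" "'a fm" | Imp "'a fm" "'a fm"

type_synonym lbl = nat

definition labels :: "(lbl \<times> lbl) multiset \<Rightarrow> (lbl \<times> 'a fm) multiset \<Rightarrow> (lbl \<times> 'a fm) multiset \<Rightarrow> lbl set" where
  "labels R G D = fst ` set_mset R \<union> snd ` set_mset R \<union> fst ` set_mset G \<union> fst ` set_mset D"

text \<open>lprov R G D : the labelled sequent R, G => D is derivable in L(IL).
  A relational atom w \<le> u is the pair (w,u); a labelled formula w:A is (w,A).\<close>

inductive lprov :: "(lbl \<times> lbl) multiset \<Rightarrow> (lbl \<times> 'a fm) multiset \<Rightarrow> (lbl \<times> 'a fm) multiset \<Rightarrow> bool" where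
  l_id: "lprov (R + {#(w,u)#}) (G + {#(w, At p)#}) (D + {#(u, At p)#})"
| l_bot: "lprov (R + {#(w,u)#}) (G + {#(w, Bot)#}) D"
| l_imp_r: "\<lbrakk> u \<notin> labels R G (D + {#(w, Imp A B)#});
             lprov (R + {#(w,u)#}) (G + {#(u, A)#}) (D + {#(u, B)#}) \<rbrakk>
            \<Longrightarrow> lprov R G (D + {#(w, Imp A B)#})"
| l_or_l: "\<lbrakk> lprov R (G + {#(w, A)#}) D; lprov R (G + {#(w, B)#}) D \<rbrakk>
            \<Longrightarrow> lprov R (G + {#(w, Or A B)#}) D"
| l_or_r: "lprov R G (D + {#(w, A), (w, B)#}) \<Longrightarrow> lprov R G (D + {#(w, Or A B)#})"
| l_and_l: "lprov R (G + {#(w, A), (w, B)#}) D \<Longrightarrow> lprov R (G + {#(w, And A B)#}) D"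
| l_and_r: "\<lbrakk> lprov R G (D + {#(w, A)#}); lprov R G (D + {#(w, B)#}) \<rbrakk>
            \<Longrightarrow> lprov R G (D + {#(w, And A B)#})"
| l_imp_l: "\<lbrakk> lprov (R + {#(w,u)#}) (G + {#(w, Imp A B), (u, B)#}) D;
             lprov (R + {#(w,u)#}) (G + {#(w, Imp A B)#}) (D + {#(u, A)#}) \<rbrakk>
            \<Longrightarrow> lprov (R + {#(w,u)#}) (G + {#(w, Imp A B)#}) D"
| l_ref: "lprov (R + {#(w,w)#}) G D \<Longrightarrow> lprov R G D"
| l_tra: "lprov (R + {#(w,u), (u,v), (w,v)#}) G D \<Longrightarrow> lprov (R + {#(w,u), (u,v)#}) G D"

text \<open>A nested sequent G => D, [S1], ..., [Sn] is a tree node with antecedent G,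
  succedent D and children S1..Sn. Nodes are addressed by paths (lists of child
  indices) from the root; these play the role of the node names. Node v is
  reachable from node w iff the path of v extends the path of w.\<close>

datatype 'a nseq = NNode "'a fm multiset" "'a fm multiset" "'a nseq list"

function node_at :: "'a nseq \<Rightarrow> nat list \<Rightarrow> 'a nseq option" where
  "node_at t [] = Some t"
| "node_at (NNode G D cs) (i # p) = (if i < length cs then node_at (cs ! i) p else None)"
  by pat_completeness auto
termination by (relation "measure (\<lambda>(t, p). length p)") auto

function upd_at :: "'a nseq \<Rightarrow> nat list \<Rightarrow> 'a nseq \<Rightarrow> 'a nseq" where
  "upd_at t [] s = s"
| "upd_at (NNode G D cs) (i # p) s =
     (if i < length cs then NNode G D (cs[i := upd_at (cs ! i) p s]) else NNode G D cs)"
  by pat_completeness auto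
termination by (relation "measure (\<lambda>(t, p, s). length p)") auto

inductive nprov :: "'a nseq \<Rightarrow> bool" where
  n_id: "\<lbrakk> node_at t p = Some (NNode G1 D1 c1); node_at t (p @ q) = Some (NNode G2 D2 c2);
          At x \<in># G1; At x \<in># D2 \<rbrakk> \<Longrightarrow> nprov t"
| n_bot: "\<lbrakk> node_at t p = Some (NNode G D c); Bot \<in># G \<rbrakk> \<Longrightarrow> nprov t"
| n_or_l: "\<lbrakk> node_at t p = Some (NNode (G + {#Or A B#}) D c);
            nprov (upd_at t p (NNode (G + {#A#}) D c));
            nprov (upd_at t p (NNode (G + {#B#}) D c)) \<rbrakk> \<Longrightarrow> nprov t"
| n_or_r: "\<lbrakk> node_at t p = Some (NNode G (D + {#Or A B#}) c);
            nprov (upd_at t p (NNode G (D + {#A, B#}) c)) \<rbrakk> \<Longrightarrow> nprov t"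
| n_and_l: "\<lbrakk> node_at t p = Some (NNode (G + {#And A B#}) D c);
            nprov (upd_at t p (NNode (G + {#A, B#}) D c)) \<rbrakk> \<Longrightarrow> nprov t"
| n_and_r: "\<lbrakk> node_at t p = Some (NNode G (D + {#And A B#}) c);
            nprov (upd_at t p (NNode G (D + {#A#}) c));
            nprov (upd_at t p (NNode G (D + {#B#}) c)) \<rbrakk> \<Longrightarrow> nprov t"
| n_imp_l: "\<lbrakk> node_at t p = Some (NNode G1 D1 c1); Imp A B \<in># G1;
             node_at t (p @ q) = Some (NNode G2 D2 c2);
             nprov (upd_at t (p @ q) (NNode (G2 + {#B#}) D2 c2));
             nprov (upd_at t (p @ q) (NNode G2 (D2 + {#A#}) c2)) \<rbrakk> \<Longrightarrow> nprov t"
| n_imp_r: "\<lbrakk> node_at t p = Some (NNode G (D + {#Imp A B#}) c);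
             nprov (upd_at t p (NNode G D (c @ [NNode {#A#} {#B#} []]))) \<rbrakk>
            \<Longrightarrow> nprov t"

end

theory Submission imports Defs begin

definition nd :: "'a nseq \<Rightarrow> nat list \<Rightarrow> ('a fm multiset \<times> 'a fm multiset) option" where
  "nd t p = map_option (\<lambda>n. case n of NNode G D c \<Rightarrow> (G, D)) (node_at t p)"

lemma L0: "node_at t p = Some s \<Longrightarrow> node_at t (p @ r) = node_at s r"
proof (induction p arbitrary: t)
  case Nil then show ?case by simp
next
  case (Cons i p) then show ?case by (cases t) (auto split: if_splits)
qed

lemma L1: "node_at t p \<noteq> None \<Longrightarrow> node_at (upd_at t p s) (p @ r) = node_at s r"
proof (induction p arbitrary: t)
  case Nil then show ?case by simp
next
  case (Cons i p) then show ?case by (cases t) (auto split: if_splits)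
qed

lemma L2: "(\<forall>r. q \<noteq> p @ r) \<Longrightarrow> nd (upd_at t p s) q = nd t q"
proof (induction p arbitrary: t q)
  case Nil then show ?case by simp
next
  case (Cons i p)
  obtain G D cs where t: "t = NNode G D cs" by (cases t)
  show ?case
  proof (cases q)
    case Nil then show ?thesis using t by (simp add: nd_def)
  next
    case (Cons j q')
    show ?thesis
    proof (cases "j = i")
      case True
      then have "\<forall>r. q' \<noteq> p @ r" using Cons.prems \<open>q = j # q'\<close> by auto
      then show ?thesis using Cons.IH[of q' "cs ! i"] t \<open>q = j # q'\<close> True
        by (auto simp: nd_def)
    next
      case False
      then show ?thesis using t \<open>q = j # q'\<close> by (auto simp: nd_def)
    qed
  qed
qed

lemma nd_same:
  assumes "node_at t P = Some (NNode G D c)"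
  shows "nd (upd_at t P (NNode G' D' c)) q = (if q = P then Some (G', D') else nd t q)"
proof (cases "\<exists>r. q = P @ r")
  case True
  then obtain r where q: "q = P @ r" by blast
  have "node_at (upd_at t P (NNode G' D' c)) q = node_at (NNode G' D' c) r"
    using L1[of t P] assms q by simp
  moreover have "node_at t q = node_at (NNode G D c) r" using L0[OF assms] q by simp
  moreover have "r \<noteq> [] \<Longrightarrow> node_at (NNode G' D' c) r = node_at (NNode G D c) r"
    by (cases r) auto
  ultimately show ?thesis using q by (cases "r = []") (auto simp: nd_def)
next
  case False
  then show ?thesis using L2[of q P t] by auto
qed

lemma nd_new:
  assumes "node_at t P = Some (NNode G D c)"
  shows "nd (upd_at t P (NNode G' D' (c @ [NNode {#A#} {#B#} []]))) q =
    (if q = P then Some (G', D') else if q = P @ [length c] then Some ({#A#}, {#B#}) else nd t q)"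
proof (cases "\<exists>r. q = P @ r")
  case True
  then obtain r where q: "q = P @ r" by blast
  have "node_at (upd_at t P (NNode G' D' (c @ [NNode {#A#} {#B#} []]))) q
     = node_at (NNode G' D' (c @ [NNode {#A#} {#B#} []])) r"
    using L1[of t P] assms q by simp
  moreover have "node_at t q = node_at (NNode G D c) r" using L0[OF assms] q by simp
  ultimately show ?thesis using q
  proof (cases r)
    case Nil then show ?thesis using q \<open>node_at t q = _\<close> \<open>node_at (upd_at _ _ _) q = _\<close>
      by (simp add: nd_def)
  next
    case (Cons i r')
    then show ?thesis using q \<open>node_at t q = _\<close> \<open>node_at (upd_at _ _ _) q = _\<close>
      by (cases r') (auto simp: nd_def nth_append)
  qed
next
  case False
  then show ?thesis using L2[of q P t] by auto
qed

definition img :: "(lbl \<Rightarrow> nat list) \<Rightarrow> (lbl \<times> 'a fm) multiset \<Rightarrow> nat list \<Rightarrow> 'a fm multiset" where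
  "img f M p = image_mset snd (filter_mset (\<lambda>x. f (fst x) = p) M)"

lemma img_add[simp]: "img f (add_mset x M) p = (if f (fst x) = p then add_mset (snd x) (img f M p) else img f M p)"
  by (simp add: img_def)
lemma img_empty[simp]: "img f {#} p = {#}" by (simp add: img_def)

definition inv :: "(lbl \<times> lbl) multiset \<Rightarrow> (lbl \<times> 'a fm) multiset \<Rightarrow> (lbl \<times> 'a fm) multiset \<Rightarrow> 'a nseq \<Rightarrow> (lbl \<Rightarrow> nat list) \<Rightarrow> bool" where
 "inv R G D t f \<longleftrightarrow>
 (\<forall>a b. (a,b) \<in># R \<longrightarrow> (\<exists>q. f b = f a @ q) \<and> (nd t (f b) \<noteq> None \<or> f a = f b)) \<and>
 (\<forall>x A. (x,A) \<in># G \<longrightarrow> nd t (f x) \<noteq> None) \<and> (\<forall>x A. (x,A) \<in># D \<longrightarrow> nd t (f x) \<noteq> None) \<and>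
 (\<forall>p Gp Dp. nd t p = Some (Gp, Dp) \<longrightarrow> img f G p \<subseteq># Gp \<and> img f D p \<subseteq># Dp)"

lemma inv_upd:
  assumes "inv R G D t f" "node_at t P = Some (NNode GP DP c)"
    "img f G2 P \<subseteq># G'" "img f D2 P \<subseteq># D'"
    "\<forall>p. p \<noteq> P \<longrightarrow> img f G2 p \<subseteq># img f G p \<and> img f D2 p \<subseteq># img f D p"
    "\<forall>x A. (x,A) \<in># G2 \<longrightarrow> nd t (f x) \<noteq> None"
    "\<forall>x A. (x,A) \<in># D2 \<longrightarrow> nd t (f x) \<noteq> None"
  shows "inv R G2 D2 (upd_at t P (NNode G' D' c)) f"
proof -
  have e: "nd (upd_at t P (NNode G' D' c)) q = (if q = P then Some (G', D') else nd t q)" for q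
    using nd_same[OF assms(2)] .
  have "nd t P \<noteq> None" using assms(2) by (simp add: nd_def)
  then have v: "nd (upd_at t P (NNode G' D' c)) q \<noteq> None \<longleftrightarrow> nd t q \<noteq> None" for q
    using e by auto
  show ?thesis unfolding inv_def
  proof (intro conjI allI impI)
    fix p Gp Dp assume h: "nd (upd_at t P (NNode G' D' c)) p = Some (Gp, Dp)"
    show "img f G2 p \<subseteq># Gp"
    proof (cases "p = P")
      case True then show ?thesis using h e assms(3) by simp
    next
      case False then show ?thesis using h e assms(1,5) unfolding inv_def
        by (metis subset_mset.trans)
    qed
    show "img f D2 p \<subseteq># Dp"
    proof (cases "p = P")
      case True then show ?thesis using h e assms(4) by simp
    next
      case False then show ?thesis using h e assms(1,5) unfolding inv_def
        by (metis subset_mset.trans)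
    qed
  qed (use assms(1,6,7) v in \<open>auto simp: inv_def\<close>)
qed

lemma nd_node: "nd t p = Some (G, D) \<Longrightarrow> \<exists>c. node_at t p = Some (NNode G D c)"
proof (cases "node_at t p")
  case (Some n) assume "nd t p = Some (G, D)" then show ?thesis using Some
    by (cases n) (auto simp: nd_def)
qed (auto simp: nd_def)

lemma nd_ex: "nd t p \<noteq> None \<Longrightarrow> \<exists>G D c. node_at t p = Some (NNode G D c)"
  by (cases "node_at t p") (auto simp: nd_def split: nseq.splits, metis nseq.exhaust)

lemma inv_G: "inv R G D t f \<Longrightarrow> (x,A) \<in># G \<Longrightarrow> \<exists>G1 D1 c1. node_at t (f x) = Some (NNode G1 D1 c1) \<and> A \<in># G1 \<and> img f G (f x) \<subseteq># G1 \<and> img f D (f x) \<subseteq># D1"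
proof -
  assume i: "inv R G D t f" and m: "(x,A) \<in># G"
  then have "nd t (f x) \<noteq> None" unfolding inv_def by blast
  then obtain G1 D1 where n: "nd t (f x) = Some (G1, D1)" by auto
  then obtain c1 where "node_at t (f x) = Some (NNode G1 D1 c1)" using nd_node by blast
  moreover have s: "img f G (f x) \<subseteq># G1" "img f D (f x) \<subseteq># D1" using i n unfolding inv_def by blast+
  moreover have "A \<in># img f G (f x)" using m by (force simp: img_def)
  ultimately show ?thesis by (meson mset_subset_eqD)
qed

lemma inv_D: "inv R G D t f \<Longrightarrow> (x,A) \<in># D \<Longrightarrow> \<exists>G1 D1 c1. node_at t (f x) = Some (NNode G1 D1 c1) \<and> A \<in># D1 \<and> img f G (f x) \<subseteq># G1 \<and> img f D (f x) \<subseteq># D1"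
proof -
  assume i: "inv R G D t f" and m: "(x,A) \<in># D"
  then have "nd t (f x) \<noteq> None" unfolding inv_def by blast
  then obtain G1 D1 where n: "nd t (f x) = Some (G1, D1)" by auto
  then obtain c1 where "node_at t (f x) = Some (NNode G1 D1 c1)" using nd_node by blast
  moreover have s: "img f G (f x) \<subseteq># G1" "img f D (f x) \<subseteq># D1" using i n unfolding inv_def by blast+
  moreover have "A \<in># img f D (f x)" using m by (force simp: img_def)
  ultimately show ?thesis by (meson mset_subset_eqD)
qed

lemma img_cong: "(\<forall>x\<in>fst ` set_mset M. f' x = f x) \<Longrightarrow> img f' M p = img f M p"
  unfolding img_def by (induction M) auto

lemma img_invalid: "(\<forall>x A. (x,A) \<in># M \<longrightarrow> nd t (f x) \<noteq> None) \<Longrightarrow> nd t p = None \<Longrightarrow> img f M p = {#}"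
  unfolding img_def by (auto simp: filter_mset_eq_conv)

lemma sub_del: "add_mset a A \<subseteq># B \<Longrightarrow> A \<subseteq># B - {#a#}"
  by (simp add: insert_subset_eq_iff)

lemma invV_G: "inv R G D t f \<Longrightarrow> (x,A) \<in># G \<Longrightarrow> nd t (f x) \<noteq> None"
  unfolding inv_def by blast
lemma invV_D: "inv R G D t f \<Longrightarrow> (x,A) \<in># D \<Longrightarrow> nd t (f x) \<noteq> None"
  unfolding inv_def by blast

lemma main: "lprov R G D \<Longrightarrow> inv R G D t f \<Longrightarrow> nprov t"
proof (induction R G D arbitrary: t f rule: lprov.induct)
  case (l_or_l R G w A D B)
  obtain G1 D1 c1 where 1: "node_at t (f w) = Some (NNode G1 D1 c1)" "Or A B \<in># G1"
    "img f (G + {#(w, Or A B)#}) (f w) \<subseteq># G1" "img f D (f w) \<subseteq># D1"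
    using inv_G[OF l_or_l.prems, of w "Or A B"] by auto
  let ?G0 = "G1 - {#Or A B#}"
  have e: "G1 = ?G0 + {#Or A B#}" using 1(2) by simp
  have s: "img f G (f w) \<subseteq># ?G0" using 1(3) by (simp add: sub_del)
  note V = invV_G[OF l_or_l.prems] invV_D[OF l_or_l.prems]
  show ?case
  proof (rule n_or_l)
    show "node_at t (f w) = Some (NNode (?G0 + {#Or A B#}) D1 c1)" using 1(1) e by simp
    show "nprov (upd_at t (f w) (NNode (?G0 + {#A#}) D1 c1))"
      apply (rule l_or_l.IH(1))
      apply (rule inv_upd[OF l_or_l.prems 1(1)])
      subgoal using s by simp
      subgoal using 1(4) by simp
      subgoal by simp
      subgoal using V by fastforce
      subgoal using V by fastforce
      done
    show "nprov (upd_at t (f w) (NNode (?G0 + {#B#}) D1 c1))"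
      apply (rule l_or_l.IH(2))
      apply (rule inv_upd[OF l_or_l.prems 1(1)])
      subgoal using s by simp
      subgoal using 1(4) by simp
      subgoal by simp
      subgoal using V by fastforce
      subgoal using V by fastforce
      done
  qed
next
  case (l_id R w u G p D)
  have "(w,u) \<in># R + {#(w,u)#}" by simp
  then obtain q where q: "f u = f w @ q" using l_id.prems unfolding inv_def by blast
  obtain G1 D1 c1 where 1: "node_at t (f w) = Some (NNode G1 D1 c1)" "At p \<in># G1"
    using inv_G[OF l_id.prems, of w "At p"] by auto
  obtain G2 D2 c2 where 2: "node_at t (f u) = Some (NNode G2 D2 c2)" "At p \<in># D2"
    using inv_D[OF l_id.prems, of u "At p"] by auto
  show ?case using n_id[OF 1(1) _ 1(2), of q] 2 q by simp
next
  case (l_bot R w u G D)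
  obtain G1 D1 c1 where 1: "node_at t (f w) = Some (NNode G1 D1 c1)" "Bot \<in># G1"
    using inv_G[OF l_bot.prems, of w Bot] by auto
  show ?case using n_bot[OF 1] .
next
  case (l_or_r R G D w A B)
  obtain G1 D1 c1 where 1: "node_at t (f w) = Some (NNode G1 D1 c1)" "Or A B \<in># D1"
    "img f G (f w) \<subseteq># G1" "img f (D + {#(w, Or A B)#}) (f w) \<subseteq># D1"
    using inv_D[OF l_or_r.prems, of w "Or A B"] by auto
  let ?D0 = "D1 - {#Or A B#}"
  have e: "D1 = ?D0 + {#Or A B#}" using 1(2) by simp
  have s: "img f D (f w) \<subseteq># ?D0" using 1(4) by (simp add: sub_del)
  note V = invV_G[OF l_or_r.prems] invV_D[OF l_or_r.prems]
  show ?case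
  proof (rule n_or_r)
    show "node_at t (f w) = Some (NNode G1 (?D0 + {#Or A B#}) c1)" using 1(1) e by simp
    show "nprov (upd_at t (f w) (NNode G1 (?D0 + {#A, B#}) c1))"
      apply (rule l_or_r.IH)
      apply (rule inv_upd[OF l_or_r.prems 1(1)])
      subgoal using 1(3) by simp
      subgoal using s by simp
      subgoal by simp
      subgoal using V by fastforce
      subgoal using V by fastforce
      done
  qed
next
  case (l_and_l R G w A B D)
  obtain G1 D1 c1 where 1: "node_at t (f w) = Some (NNode G1 D1 c1)" "And A B \<in># G1"
    "img f (G + {#(w, And A B)#}) (f w) \<subseteq># G1" "img f D (f w) \<subseteq># D1"
    using inv_G[OF l_and_l.prems, of w "And A B"] by auto
  let ?G0 = "G1 - {#And A B#}"
  have e: "G1 = ?G0 + {#And A B#}" using 1(2) by simp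
  have s: "img f G (f w) \<subseteq># ?G0" using 1(3) by (simp add: sub_del)
  note V = invV_G[OF l_and_l.prems] invV_D[OF l_and_l.prems]
  show ?case
  proof (rule n_and_l)
    show "node_at t (f w) = Some (NNode (?G0 + {#And A B#}) D1 c1)" using 1(1) e by simp
    show "nprov (upd_at t (f w) (NNode (?G0 + {#A, B#}) D1 c1))"
      apply (rule l_and_l.IH)
      apply (rule inv_upd[OF l_and_l.prems 1(1)])
      subgoal using s by simp
      subgoal using 1(4) by simp
      subgoal by simp
      subgoal using V by fastforce
      subgoal using V by fastforce
      done
  qed
next
  case (l_and_r R G D w A B)
  obtain G1 D1 c1 where 1: "node_at t (f w) = Some (NNode G1 D1 c1)" "And A B \<in># D1"
    "img f G (f w) \<subseteq># G1" "img f (D + {#(w, And A B)#}) (f w) \<subseteq># D1"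
    using inv_D[OF l_and_r.prems, of w "And A B"] by auto
  let ?D0 = "D1 - {#And A B#}"
  have e: "D1 = ?D0 + {#And A B#}" using 1(2) by simp
  have s: "img f D (f w) \<subseteq># ?D0" using 1(4) by (simp add: sub_del)
  note V = invV_G[OF l_and_r.prems] invV_D[OF l_and_r.prems]
  show ?case
  proof (rule n_and_r)
    show "node_at t (f w) = Some (NNode G1 (?D0 + {#And A B#}) c1)" using 1(1) e by simp
    show "nprov (upd_at t (f w) (NNode G1 (?D0 + {#A#}) c1))"
      apply (rule l_and_r.IH(1))
      apply (rule inv_upd[OF l_and_r.prems 1(1)])
      subgoal using 1(3) by simp
      subgoal using s by simp
      subgoal by simp
      subgoal using V by fastforce
      subgoal using V by fastforce
      done
    show "nprov (upd_at t (f w) (NNode G1 (?D0 + {#B#}) c1))"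
      apply (rule l_and_r.IH(2))
      apply (rule inv_upd[OF l_and_r.prems 1(1)])
      subgoal using 1(3) by simp
      subgoal using s by simp
      subgoal by simp
      subgoal using V by fastforce
      subgoal using V by fastforce
      done
  qed
next
  case (l_ref R w G D)
  have "\<forall>a b. (a,b) \<in># R \<longrightarrow> (\<exists>q. f b = f a @ q) \<and> (nd t (f b) \<noteq> None \<or> f a = f b)"
    using l_ref.prems unfolding inv_def by blast
  moreover have "(\<exists>q. f w = f w @ q) \<and> (nd t (f w) \<noteq> None \<or> f w = f w)" by simp
  ultimately have "\<forall>a b. (a,b) \<in># R + {#(w,w)#} \<longrightarrow> (\<exists>q. f b = f a @ q) \<and> (nd t (f b) \<noteq> None \<or> f a = f b)"
    by (metis (no_types, lifting) add_mset_add_single insert_DiffM2 insert_noteq_member prod.inject)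
  then have "inv (R + {#(w,w)#}) G D t f" using l_ref.prems unfolding inv_def by blast
  then show ?case by (rule l_ref.IH)
next
  case (l_tra R w u v G D)
  show ?case
  proof (rule l_tra.IH)
    have a: "(\<exists>q. f u = f w @ q) \<and> (nd t (f u) \<noteq> None \<or> f w = f u)"
         "(\<exists>q. f v = f u @ q) \<and> (nd t (f v) \<noteq> None \<or> f u = f v)"
      using l_tra.prems unfolding inv_def by simp_all
    then obtain q1 q2 where "f u = f w @ q1" "f v = f u @ q2" by blast
    then have "f v = f w @ (q1 @ q2)" by simp
    then have b: "(\<exists>q. f v = f w @ q) \<and> (nd t (f v) \<noteq> None \<or> f w = f v)" using a by metis
    have h: "\<forall>a b. (a,b) \<in># R + {#(w, u), (u, v)#} \<longrightarrow> (\<exists>q. f b = f a @ q) \<and> (nd t (f b) \<noteq> None \<or> f a = f b)"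
      using l_tra.prems unfolding inv_def by blast
    have "\<forall>a b. (a,b) \<in># R + {#(w, u), (u, v), (w, v)#} \<longrightarrow> (\<exists>q. f b = f a @ q) \<and> (nd t (f b) \<noteq> None \<or> f a = f b)"
    proof (intro allI impI)
      fix a b assume "(a,b) \<in># R + {#(w, u), (u, v), (w, v)#}"
      then have "(a,b) = (w,v) \<or> (a,b) \<in># R + {#(w, u), (u, v)#}" by auto
      then show "(\<exists>q. f b = f a @ q) \<and> (nd t (f b) \<noteq> None \<or> f a = f b)"
      proof (elim disjE)
        assume "(a,b) = (w,v)" then show ?thesis using b by simp
      next
        assume "(a,b) \<in># R + {#(w, u), (u, v)#}" then show ?thesis using h by blast
      qed
    qed
    then show "inv (R + {#(w, u), (u, v), (w, v)#}) G D t f" using l_tra.prems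
      unfolding inv_def by blast
  qed
next
  case (l_imp_l R w u G A B D)
  have "(w,u) \<in># R + {#(w,u)#}" by simp
  then have wu: "(\<exists>q. f u = f w @ q) \<and> (nd t (f u) \<noteq> None \<or> f w = f u)"
    using l_imp_l.prems unfolding inv_def by blast
  then obtain q where q: "f u = f w @ q" by blast
  obtain G1 D1 c1 where 1: "node_at t (f w) = Some (NNode G1 D1 c1)" "Imp A B \<in># G1"
    using inv_G[OF l_imp_l.prems, of w "Imp A B"] by auto
  have "nd t (f u) \<noteq> None \<or> f w = f u" using wu by blast
  then have "nd t (f u) \<noteq> None" using 1(1) by (auto simp: nd_def)
  then obtain G2 D2 c2 where 2: "node_at t (f u) = Some (NNode G2 D2 c2)" using nd_ex by blast
  then have n2: "nd t (f u) = Some (G2, D2)" by (simp add: nd_def)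
  have s: "img f (G + {#(w, Imp A B)#}) (f u) \<subseteq># G2" "img f D (f u) \<subseteq># D2"
    using l_imp_l.prems n2 unfolding inv_def by blast+
  have vu: "nd t (f u) \<noteq> None" using n2 by simp
  note V = invV_G[OF l_imp_l.prems] invV_D[OF l_imp_l.prems]
  show ?case
  proof (rule n_imp_l[OF 1(1) 1(2)])
    show "node_at t (f w @ q) = Some (NNode G2 D2 c2)" using 2 q by simp
    show "nprov (upd_at t (f w @ q) (NNode (G2 + {#B#}) D2 c2))"
      unfolding q[symmetric]
      apply (rule l_imp_l.IH(1))
      apply (rule inv_upd[OF l_imp_l.prems 2])
      subgoal using s by (simp split: if_splits)
      subgoal using s by (simp split: if_splits)
      subgoal by simp
      subgoal using V vu by fastforce
      subgoal using V by fastforce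
      done
    show "nprov (upd_at t (f w @ q) (NNode G2 (D2 + {#A#}) c2))"
      unfolding q[symmetric]
      apply (rule l_imp_l.IH(2))
      apply (rule inv_upd[OF l_imp_l.prems 2])
      subgoal using s by (simp split: if_splits)
      subgoal using s by (simp split: if_splits)
      subgoal by simp
      subgoal using V by fastforce
      subgoal using V vu by fastforce
      done
  qed
next
  case (l_imp_r u R G D w A B)
  note fr = l_imp_r.hyps(1)
  have uw: "u \<noteq> w" using fr by (force simp: labels_def)
  have uR: "\<And>a b. (a,b) \<in># R \<Longrightarrow> a \<noteq> u \<and> b \<noteq> u" using fr by (force simp: labels_def)
  have uG: "\<And>x C. (x,C) \<in># G \<Longrightarrow> x \<noteq> u" using fr by (force simp: labels_def)
  have uD: "\<And>x C. (x,C) \<in># D \<Longrightarrow> x \<noteq> u" using fr by (force simp: labels_def)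
  obtain G1 D1 c1 where 1: "node_at t (f w) = Some (NNode G1 D1 c1)" "Imp A B \<in># D1"
    "img f G (f w) \<subseteq># G1" "img f (D + {#(w, Imp A B)#}) (f w) \<subseteq># D1"
    using inv_D[OF l_imp_r.prems, of w "Imp A B"] by auto
  let ?D0 = "D1 - {#Imp A B#}"
  have e: "D1 = ?D0 + {#Imp A B#}" using 1(2) by simp
  have s: "img f D (f w) \<subseteq># ?D0" using 1(4) by (simp add: sub_del)
  define P where "P = f w @ [length c1]"
  define f' where "f' = f(u := P)"
  define t1 where "t1 = upd_at t (f w) (NNode G1 ?D0 (c1 @ [NNode {#A#} {#B#} []]))"
  have E: "nd t1 q = (if q = f w then Some (G1, ?D0) else if q = P then Some ({#A#}, {#B#}) else nd t q)" for q
    unfolding t1_def P_def by (rule nd_new[OF 1(1)])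
  have nP: "nd t P = None" using L0[OF 1(1), of "[length c1]"] by (simp add: P_def nd_def)
  have Pfw: "P \<noteq> f w" by (simp add: P_def)
  have mono: "nd t q \<noteq> None \<Longrightarrow> nd t1 q \<noteq> None" for q using E by auto
  have vP: "nd t1 P \<noteq> None" using E by simp
  have VG: "\<forall>x C. (x,C) \<in># G \<longrightarrow> nd t (f x) \<noteq> None" using l_imp_r.prems unfolding inv_def by blast
  have VD: "\<forall>x C. (x,C) \<in># D \<longrightarrow> nd t (f x) \<noteq> None" using l_imp_r.prems unfolding inv_def by auto
  have VR: "\<forall>a b. (a,b) \<in># R \<longrightarrow> (\<exists>q. f b = f a @ q) \<and> (nd t (f b) \<noteq> None \<or> f a = f b)"
    using l_imp_r.prems unfolding inv_def by blast
  have IG: "\<forall>p Gp Dp. nd t p = Some (Gp, Dp) \<longrightarrow> img f G p \<subseteq># Gp \<and> img f (D + {#(w, Imp A B)#}) p \<subseteq># Dp"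
    using l_imp_r.prems unfolding inv_def by blast
  have imgG: "img f' G p = img f G p" for p
    by (rule img_cong) (use uG in \<open>force simp: f'_def\<close>)
  have imgD: "img f' D p = img f D p" for p
    by (rule img_cong) (use uD in \<open>force simp: f'_def\<close>)
  have f'u: "f' u = P" and f'w: "f' w = f w" using uw by (simp_all add: f'_def)
  have "inv (R + {#(w,u)#}) (G + {#(u,A)#}) (D + {#(u,B)#}) t1 f'"
    unfolding inv_def
  proof (intro conjI allI impI)
    fix a b assume ab: "(a,b) \<in># R + {#(w,u)#}"
    have c: "(\<exists>q. f' b = f' a @ q) \<and> (nd t1 (f' b) \<noteq> None \<or> f' a = f' b)"
    proof (cases "(a,b) = (w,u)")
      case True then show ?thesis using f'u f'w vP by (auto simp: P_def)
    next
      case False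
      then have r: "(a,b) \<in># R" using ab by auto
      then have "f' a = f a" "f' b = f b" using uR[OF r] by (simp_all add: f'_def)
      moreover have "(\<exists>q. f b = f a @ q) \<and> (nd t (f b) \<noteq> None \<or> f a = f b)" using VR r by blast
      ultimately show ?thesis using mono by metis
    qed
    then show "\<exists>q. f' b = f' a @ q" by blast
    show "nd t1 (f' b) \<noteq> None \<or> f' a = f' b" using c by blast
  next
    fix x C assume "(x,C) \<in># G + {#(u,A)#}"
    then have "(x,C) = (u,A) \<or> (x,C) \<in># G" by auto
    then show "nd t1 (f' x) \<noteq> None"
    proof
      assume "(x,C) = (u,A)" then show ?thesis using f'u vP by simp
    next
      assume h: "(x,C) \<in># G" then have "f' x = f x" using uG[OF h] by (simp add: f'_def)
      then show ?thesis using VG h mono by metis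
    qed
  next
    fix x C assume "(x,C) \<in># D + {#(u,B)#}"
    then have "(x,C) = (u,B) \<or> (x,C) \<in># D" by auto
    then show "nd t1 (f' x) \<noteq> None"
    proof
      assume "(x,C) = (u,B)" then show ?thesis using f'u vP by simp
    next
      assume h: "(x,C) \<in># D" then have "f' x = f x" using uD[OF h] by (simp add: f'_def)
      then show ?thesis using VD h mono by metis
    qed
  next
    fix p Gp Dp assume h: "nd t1 p = Some (Gp, Dp)"
    have iG: "img f' (G + {#(u,A)#}) p = (if P = p then add_mset A (img f G p) else img f G p)"
      using f'u imgG by simp
    have iD: "img f' (D + {#(u,B)#}) p = (if P = p then add_mset B (img f D p) else img f D p)"
      using f'u imgD by simp
    have "img f' (G + {#(u,A)#}) p \<subseteq># Gp \<and> img f' (D + {#(u,B)#}) p \<subseteq># Dp"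
    proof (cases "p = f w")
      case True
      then show ?thesis using h E iG iD Pfw 1(3) s by simp
    next
      case False
      show ?thesis
      proof (cases "p = P")
        case True
        have "img f G P = {#}" by (rule img_invalid[OF VG nP])
        moreover have "img f D P = {#}" by (rule img_invalid[OF VD nP])
        ultimately show ?thesis using h E iG iD True False by simp
      next
        case False2: False
        then have "nd t p = Some (Gp, Dp)" using h E False by simp
        then have "img f G p \<subseteq># Gp" "img f (D + {#(w, Imp A B)#}) p \<subseteq># Dp" using IG by blast+
        then show ?thesis using iG iD False False2 by (simp split: if_splits)
      qed
    qed
    then show "img f' (G + {#(u,A)#}) p \<subseteq># Gp" "img f' (D + {#(u,B)#}) p \<subseteq># Dp" by simp_all
  qed
  then have "nprov t1" by (rule l_imp_r.IH)
  show ?case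
  proof (rule n_imp_r)
    show "node_at t (f w) = Some (NNode G1 (?D0 + {#Imp A B#}) c1)" using 1(1) e by simp
    show "nprov (upd_at t (f w) (NNode G1 ?D0 (c1 @ [NNode {#A#} {#B#} []])))"
      using \<open>nprov t1\<close> by (simp add: t1_def)
  qed
qed

theorem mainTheorem9:
  fixes A :: "'a fm" and w :: lbl
  assumes "lprov {#} {#} {#(w, A)#}"
  shows "nprov (NNode {#} {#A#} [])"
proof (rule main[OF assms])
  show "inv {#} {#} {#(w, A)#} (NNode {#} {#A#} []) (\<lambda>_. [])"
    unfolding inv_def by (simp add: nd_def)
qed

end
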